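(* Let $D$ be a consistent domain, $a$ a sensing action and $(M,s)$ a state such that $a$ is executable in $(M,s)$ and $(M,s)$ is consistency preserving for $a$. Let $(M',s')\in\Phi^s_D(a,(M,s))$. Then: (1) for every $f\in Sensed_D(a)$ and $\ell\in\{f,\neg f\}$, if $(M,s)\models\ell$ then $(M',s')\models\mathbf C_{F_D(a,M,s)}\ell$; (2) for every $f\in Sensed_D(a)$, $(M',s')\models\mathbf C_{P_D(a,M,s)}\big(\mathbf C_{F_D(a,M,s)}f\vee\mathbf C_{F_D(a,M,s)}\neg f\big)$; (3) for every $i\in O_D(a,M,s)$ and every belief formula $\psi$, $(M',s')\models\mathbf B_i\psi$ iff $(M,s)\models\mathbf B_i\psi$.
   Context: Fix a finite set of agents $\mathcal{AG}=\{1,\dots,n\}$, a set $\mathcal F$ of fluents and a set of actions. Belief formulae are built from propositional (fluent) formulae over $\mathcal F$ using $\mathbf B_i\varphi$ ($i\in\mathcal{AG}$), Boolean connectives, and $\mathbf E_\alpha\varphi,\mathbf C_\alpha\varphi$ for nonempty $\alpha\subseteq\mathcal{AG}$. A Kripke structure $M$ has worlds $M[S]$, interpretations $M[\pi](u)\subseteq\mathcal F$, and relations $M[i]\subseteq M[S]\times M[S]$; a state is $(M,s)$ with $s\in M[S]$. Satisfaction: fluent formulae are evaluated in $M[\pi](s)$; $(M,s)\models\mathbf B_i\varphi$ iff $(M,t)\models\varphi$ for all $t$ with $(s,t)\in M[i]$; Boolean connectives as usual; $\mathbf E_\alpha\varphi$ iff $\mathbf B_i\varphi$ for all $i\in\alpha$;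 $\mathbf C_\alpha\varphi$ iff $\mathbf E^k_\alpha\varphi$ for all $k\ge 0$ ($\mathbf E^0_\alpha\varphi=\varphi$, $\mathbf E^{k+1}_\alpha\varphi=\mathbf E_\alpha\mathbf E^k_\alpha\varphi$). A domain $D$ contains for each action $a$ exactly one "executable $a$ if $\psi$" ($\psi$ a belief formula; $a$ is executable in $(M,u)$ iff $(M,u)\models\psi$), for sensing actions statements "$a$ determines $f$" ($f\in\mathcal F$), with $Sensed_D(a)=\{f\mid$ "$a$ determines $f$" $\in D\}$, and observability statements "$X$ observes $a$ if $\varphi$", "$X$ aware\_of $a$ if $\varphi$" ($X$ agent, $\varphi$ fluent formula). $F_D(a,M,s)$ (full observers) is the set of $X$ with some "$X$ observes $a$ if $\varphi$" in $D$ and $(M,s)\models\varphi$; $P_D(a,M,s)$ (partial observers) is defined likewise with "aware\_of"; $O_D(a,M,s)$ is the set of remaining agents. $D$ is consistent if in particular $F_D(a,M,s)\cap P_D(a,M,s)=\emptyset$ always (and effects of world-altering actions are consistent). Transition $\Phi^s_D$: if $a$ is executable in $(M,s)$, $\Phi^s_D(a,(M,s))=\{(M',s')\}$ built as follows. Let $c$ be a bijection from $M[S]$ onto a set of fresh worlds. $M''$ has worlds $c(u)$ for those $u\in M[S]$ with $a$ executable in $(M,u)$, with interpretation of $c(u)$ equal to $M[\pi](u)$; for $i\in F_D(a,M,s)$, $(c(u),c(v))\in M''[i]$ iff both are worlds of $M''$, $(u,v)\in M[i]$ and $u,v$ agree on every $f\in Sensed_D(a)$; for $i\in P_D(a,M,s)$,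 $(c(u),c(v))\in M''[i]$ iff both are worlds of $M''$ and $(u,v)\in M[i]$; for $i\in O_D(a,M,s)$, $M''[i]=\emptyset$. Then $M'[S]=M[S]\cup M''[S]$ with interpretations inherited; $M'[i]=M[i]\cup M''[i]$ for $i\in F_D(a,M,s)\cup P_D(a,M,s)$; $M'[i]=M[i]\cup\{(c(u),v)\mid c(u)\in M''[S],(u,v)\in M[i]\}$ for $i\in O_D(a,M,s)$; and $s'=c(s)$. $(M,s)$ is consistency preserving for the sensing action $a$ if $(M,u)\not\models\mathbf B_if\vee\mathbf B_i\neg f$ for every $u\in M[S]$, every $i\in F_D(a,M,s)\cup P_D(a,M,s)$ and every $f\in Sensed_D(a)$. *)

theory Defs
  imports Main
begin

datatype ('ag, 'f) bform =
    Fl 'f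
  | Neg "('ag, 'f) bform"
  | And "('ag, 'f) bform" "('ag, 'f) bform"
  | Or "('ag, 'f) bform" "('ag, 'f) bform"
  | Imp "('ag, 'f) bform" "('ag, 'f) bform"
  | B 'ag "('ag, 'f) bform"
  | E "'ag set" "('ag, 'f) bform"
  | C "'ag set" "('ag, 'f) bform"

fun fluent_form :: "('ag, 'f) bform \<Rightarrow> bool" where
  "fluent_form (Fl f) = True"
| "fluent_form (Neg \<phi>) = fluent_form \<phi>"
| "fluent_form (And \<phi> \<psi>) = (fluent_form \<phi> \<and> fluent_form \<psi>)"
| "fluent_form (Or \<phi> \<psi>) = (fluent_form \<phi> \<and> fluent_form \<psi>)"
| "fluent_form (Imp \<phi> \<psi>) = (fluent_form \<phi> \<and> fluent_form \<psi>)"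
| "fluent_form (B i \<phi>) = False"
| "fluent_form (E \<alpha> \<phi>) = False"
| "fluent_form (C \<alpha> \<phi>) = False"

fun fl_sat :: "'f set \<Rightarrow> ('ag, 'f) bform \<Rightarrow> bool" where
  "fl_sat I (Fl f) = (f \<in> I)"
| "fl_sat I (Neg \<phi>) = (\<not> fl_sat I \<phi>)"
| "fl_sat I (And \<phi> \<psi>) = (fl_sat I \<phi> \<and> fl_sat I \<psi>)"
| "fl_sat I (Or \<phi> \<psi>) = (fl_sat I \<phi> \<or> fl_sat I \<psi>)"
| "fl_sat I (Imp \<phi> \<psi>) = (fl_sat I \<phi> \<longrightarrow> fl_sat I \<psi>)"
| "fl_sat I (B i \<phi>) = False"
| "fl_sat I (E \<alpha> \<phi>) = False"
| "fl_sat I (C \<alpha> \<phi>) = False"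

record ('ag, 'f, 'w) kripke =
  worlds :: "'w set"
  interp :: "'w \<Rightarrow> 'f set"
  rel :: "'ag \<Rightarrow> ('w \<times> 'w) set"

definition is_state :: "('ag, 'f, 'w) kripke \<Rightarrow> 'w \<Rightarrow> bool" where
  "is_state M s \<longleftrightarrow> s \<in> worlds M \<and> (\<forall>i. rel M i \<subseteq> worlds M \<times> worlds M)"

definition E_op :: "('ag, 'f, 'w) kripke \<Rightarrow> 'ag set \<Rightarrow> ('w \<Rightarrow> bool) \<Rightarrow> 'w \<Rightarrow> bool" where
  "E_op M \<alpha> P s \<longleftrightarrow> (\<forall>i\<in>\<alpha>. \<forall>t. (s, t) \<in> rel M i \<longrightarrow> P t)"

fun sat :: "('ag, 'f, 'w) kripke \<Rightarrow> 'w \<Rightarrow> ('ag, 'f) bform \<Rightarrow> bool" where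
  "sat M s (Fl f) = (f \<in> interp M s)"
| "sat M s (Neg \<phi>) = (\<not> sat M s \<phi>)"
| "sat M s (And \<phi> \<psi>) = (sat M s \<phi> \<and> sat M s \<psi>)"
| "sat M s (Or \<phi> \<psi>) = (sat M s \<phi> \<or> sat M s \<psi>)"
| "sat M s (Imp \<phi> \<psi>) = (sat M s \<phi> \<longrightarrow> sat M s \<psi>)"
| "sat M s (B i \<phi>) = (\<forall>t. (s, t) \<in> rel M i \<longrightarrow> sat M t \<phi>)"
| "sat M s (E \<alpha> \<phi>) = (\<forall>i\<in>\<alpha>. \<forall>t. (s, t) \<in> rel M i \<longrightarrow> sat M t \<phi>)"
| "sat M s (C \<alpha> \<phi>) = (\<forall>k. ((E_op M \<alpha>) ^^ k) (\<lambda>t. sat M t \<phi>) s)"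

text \<open>exec a: the unique executability condition of a ("executable a if exec a");
  determines: pairs (a,f) for "a determines f";
  causes: triples (a,l,phi) for "a causes l if phi" (l a fluent literal: (f,True) = f, (f,False) = neg f);
  observes / aware: triples (X,a,phi) for "X observes a if phi" / "X aware_of a if phi".\<close>
record ('ag, 'f, 'act) domain =
  exec :: "'act \<Rightarrow> ('ag, 'f) bform"
  determines :: "('act \<times> 'f) set"
  causes :: "('act \<times> ('f \<times> bool) \<times> ('ag, 'f) bform) set"
  observes :: "('ag \<times> 'act \<times> ('ag, 'f) bform) set"
  aware :: "('ag \<times> 'act \<times> ('ag, 'f) bform) set"

definition wf_domain :: "('ag, 'f, 'act) domain \<Rightarrow> bool" where
  "wf_domain D \<longleftrightarrow>
     (\<forall>X a \<phi>. (X, a, \<phi>) \<in> observes D \<longrightarrow> fluent_form \<phi>) \<and>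
     (\<forall>X a \<phi>. (X, a, \<phi>) \<in> aware D \<longrightarrow> fluent_form \<phi>) \<and>
     (\<forall>a l \<phi>. (a, l, \<phi>) \<in> causes D \<longrightarrow> fluent_form \<phi>)"

definition Sensed :: "('ag, 'f, 'act) domain \<Rightarrow> 'act \<Rightarrow> 'f set" where
  "Sensed D a = {f. (a, f) \<in> determines D}"

definition sensing_action :: "('ag, 'f, 'act) domain \<Rightarrow> 'act \<Rightarrow> bool" where
  "sensing_action D a \<longleftrightarrow> Sensed D a \<noteq> {} \<and> (\<forall>l \<phi>. (a, l, \<phi>) \<notin> causes D)"

definition executable :: "('ag, 'f, 'act) domain \<Rightarrow> 'act \<Rightarrow> ('ag, 'f, 'w) kripke \<Rightarrow> 'w \<Rightarrow> bool" where
  "executable D a M u \<longleftrightarrow> sat M u (exec D a)"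

definition FD :: "('ag, 'f, 'act) domain \<Rightarrow> 'act \<Rightarrow> ('ag, 'f, 'w) kripke \<Rightarrow> 'w \<Rightarrow> 'ag set" where
  "FD D a M s = {X. \<exists>\<phi>. (X, a, \<phi>) \<in> observes D \<and> sat M s \<phi>}"

definition PD :: "('ag, 'f, 'act) domain \<Rightarrow> 'act \<Rightarrow> ('ag, 'f, 'w) kripke \<Rightarrow> 'w \<Rightarrow> 'ag set" where
  "PD D a M s = {X. \<exists>\<phi>. (X, a, \<phi>) \<in> aware D \<and> sat M s \<phi>}"

definition OD :: "('ag, 'f, 'act) domain \<Rightarrow> 'act \<Rightarrow> ('ag, 'f, 'w) kripke \<Rightarrow> 'w \<Rightarrow> 'ag set" where
  "OD D a M s = UNIV - (FD D a M s \<union> PD D a M s)"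

text \<open>Consistency: since all conditions are fluent formulae, quantifying over all states
  amounts to quantifying over all interpretations I.\<close>
definition consistent_domain :: "('ag, 'f, 'act) domain \<Rightarrow> bool" where
  "consistent_domain D \<longleftrightarrow> wf_domain D \<and>
     (\<forall>I a. {X. \<exists>\<phi>. (X, a, \<phi>) \<in> observes D \<and> fl_sat I \<phi>}
          \<inter> {X. \<exists>\<phi>. (X, a, \<phi>) \<in> aware D \<and> fl_sat I \<phi>} = {}) \<and>
     (\<forall>I a f \<phi>1 \<phi>2. (a, (f, True), \<phi>1) \<in> causes D \<and> (a, (f, False), \<phi>2) \<in> causes D
          \<longrightarrow> \<not> (fl_sat I \<phi>1 \<and> fl_sat I \<phi>2))"

text \<open>The fresh copy c(u) of world u is Inr u; old worlds u are embedded as Inl u.\<close>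
definition agree_on :: "'f set \<Rightarrow> ('ag, 'f, 'w) kripke \<Rightarrow> 'w \<Rightarrow> 'w \<Rightarrow> bool" where
  "agree_on S M u v \<longleftrightarrow> (\<forall>f\<in>S. f \<in> interp M u \<longleftrightarrow> f \<in> interp M v)"

definition new_worlds :: "('ag, 'f, 'act) domain \<Rightarrow> 'act \<Rightarrow> ('ag, 'f, 'w) kripke \<Rightarrow> ('w + 'w) set" where
  "new_worlds D a M = Inr ` {u \<in> worlds M. executable D a M u}"

definition sense_update :: "('ag, 'f, 'act) domain \<Rightarrow> 'act \<Rightarrow> ('ag, 'f, 'w) kripke \<Rightarrow> 'w
     \<Rightarrow> ('ag, 'f, 'w + 'w) kripke" where
  "sense_update D a M s =
     \<lparr> worlds = Inl ` worlds M \<union> new_worlds D a M,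
       interp = case_sum (interp M) (interp M),
       rel = (\<lambda>i. {(Inl u, Inl v) | u v. (u, v) \<in> rel M i} \<union>
                (if i \<in> FD D a M s then
                   {(Inr u, Inr v) | u v. Inr u \<in> new_worlds D a M \<and> Inr v \<in> new_worlds D a M
                      \<and> (u, v) \<in> rel M i \<and> agree_on (Sensed D a) M u v}
                 else if i \<in> PD D a M s then
                   {(Inr u, Inr v) | u v. Inr u \<in> new_worlds D a M \<and> Inr v \<in> new_worlds D a M
                      \<and> (u, v) \<in> rel M i}
                 else
                   {(Inr u, Inl v) | u v. Inr u \<in> new_worlds D a M \<and> (u, v) \<in> rel M i})) \<rparr>"

definition Phi :: "('ag, 'f, 'act) domain \<Rightarrow> 'act \<Rightarrow> ('ag, 'f, 'w) kripke \<Rightarrow> 'w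
     \<Rightarrow> (('ag, 'f, 'w + 'w) kripke \<times> ('w + 'w)) set" where
  "Phi D a M s = (if executable D a M s then {(sense_update D a M s, Inr s)} else {})"

definition consistency_preserving ::
    "('ag, 'f, 'act) domain \<Rightarrow> 'act \<Rightarrow> ('ag, 'f, 'w) kripke \<Rightarrow> 'w \<Rightarrow> bool" where
  "consistency_preserving D a M s \<longleftrightarrow>
     (\<forall>u\<in>worlds M. \<forall>i\<in>FD D a M s \<union> PD D a M s. \<forall>f\<in>Sensed D a.
        \<not> sat M u (Or (B i (Fl f)) (B i (Neg (Fl f)))))"

end

theory Submission
  imports Defs
begin

lemma Eop_closed:
  assumes "\<And>i x y. i \<in> \<alpha> \<Longrightarrow> (x, y) \<in> rel M i \<Longrightarrow> x \<in> S \<Longrightarrow> y \<in> S"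
    and "\<And>x. x \<in> S \<Longrightarrow> P x"
  shows "x \<in> S \<Longrightarrow> (E_op M \<alpha> ^^ k) P x"
proof (induction k arbitrary: x)
  case 0 then show ?case using assms(2) by simp
next
  case (Suc k) then show ?case using assms(1) by (auto simp: E_op_def)
qed

lemma sat_C_closed:
  assumes "\<And>i x y. i \<in> \<alpha> \<Longrightarrow> (x, y) \<in> rel M i \<Longrightarrow> x \<in> S \<Longrightarrow> y \<in> S"
    and "\<And>x. x \<in> S \<Longrightarrow> sat M x \<phi>" and "x \<in> S"
  shows "sat M x (C \<alpha> \<phi>)"
  using Eop_closed[of \<alpha> M S "\<lambda>t. sat M t \<phi>"] assms by auto

lemma rel_Inl:
  "(Inl v, t) \<in> rel (sense_update D a M s) i \<longleftrightarrow> (\<exists>w. t = Inl w \<and> (v, w) \<in> rel M i)"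
  by (auto simp: sense_update_def)

lemma Eop_Inl:
  assumes "\<And>w. P' (Inl w) = P w"
  shows "(E_op (sense_update D a M s) \<alpha> ^^ k) P' (Inl v) = (E_op M \<alpha> ^^ k) P v"
proof (induction k arbitrary: v)
  case 0 then show ?case using assms by simp
next
  case (Suc k) then show ?case by (auto simp: E_op_def rel_Inl)
qed

lemma sat_Inl:
  "sat (sense_update D a M s) (Inl v) \<psi> = sat M v \<psi>"
proof (induction \<psi> arbitrary: v)
  case (C \<alpha> \<phi>)
  have "(E_op (sense_update D a M s) \<alpha> ^^ k) (\<lambda>t. sat (sense_update D a M s) t \<phi>) (Inl v)
        = (E_op M \<alpha> ^^ k) (\<lambda>t. sat M t \<phi>) v" for k
    by (rule Eop_Inl) (simp add: C)
  then show ?case by simp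
qed (auto simp: rel_Inl sense_update_def)

lemma rel_Inr_F:
  "i \<in> FD D a M s \<Longrightarrow> (Inr u, t) \<in> rel (sense_update D a M s) i \<Longrightarrow>
     \<exists>v. t = Inr v \<and> agree_on (Sensed D a) M u v"
  by (auto simp: sense_update_def)

lemma rel_Inr_P:
  "i \<in> PD D a M s \<Longrightarrow> (Inr u, t) \<in> rel (sense_update D a M s) i \<Longrightarrow> \<exists>v. t = Inr v"
  by (auto simp: sense_update_def split: if_splits)

lemma rel_Inr_O:
  "i \<in> OD D a M s \<Longrightarrow> Inr u \<in> new_worlds D a M \<Longrightarrow>
     (Inr u, t) \<in> rel (sense_update D a M s) i \<longleftrightarrow> (\<exists>w. t = Inl w \<and> (u, w) \<in> rel M i)"
  by (auto simp: sense_update_def OD_def)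

lemma interp_Inr: "interp (sense_update D a M s) (Inr u) = interp M u"
  by (simp add: sense_update_def)

lemma C_F_agree:
  fixes M :: "('ag, 'f, 'w) kripke"
  assumes "f \<in> Sensed D a" "l \<in> {Fl f, Neg (Fl f)}" "sat M u l"
  shows "sat (sense_update D a M s) (Inr u) (C (FD D a M s) l)"
proof (rule sat_C_closed[where S = "{(Inr v :: 'w + 'w) | v. agree_on (Sensed D a) M u v}"])
  fix i and x y :: "'w + 'w" assume "i \<in> FD D a M s" "(x, y) \<in> rel (sense_update D a M s) i"
    "x \<in> {Inr v | v. agree_on (Sensed D a) M u v}"
  then show "y \<in> {Inr v | v. agree_on (Sensed D a) M u v}"
    using rel_Inr_F by (fastforce simp: agree_on_def)
next
  fix x :: "'w + 'w" assume "x \<in> {Inr v | v. agree_on (Sensed D a) M u v}"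
  then show "sat (sense_update D a M s) x l"
    using assms by (auto simp: agree_on_def interp_Inr)
qed (auto simp: agree_on_def)

theorem proposition3:
  fixes D :: "('ag::finite, 'f, 'act) domain" and a :: 'act
    and M :: "('ag, 'f, 'w) kripke" and s :: 'w
    and M' :: "('ag, 'f, 'w + 'w) kripke" and s' :: "'w + 'w"
  assumes "consistent_domain D"
    and "sensing_action D a"
    and "is_state M s"
    and "executable D a M s"
    and "consistency_preserving D a M s"
    and "(M', s') \<in> Phi D a M s"
  shows "(\<forall>f\<in>Sensed D a. \<forall>l\<in>{Fl f, Neg (Fl f)}.
            sat M s l \<longrightarrow> sat M' s' (C (FD D a M s) l))
       \<and> (\<forall>f\<in>Sensed D a.
            sat M' s' (C (PD D a M s) (Or (C (FD D a M s) (Fl f)) (C (FD D a M s) (Neg (Fl f))))))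
       \<and> (\<forall>i\<in>OD D a M s. \<forall>\<psi>. sat M' s' (B i \<psi>) \<longleftrightarrow> sat M s (B i \<psi>))"
proof -
  have M': "M' = sense_update D a M s" and s': "s' = Inr s"
    using assms(6) by (auto simp: Phi_def split: if_splits)
  have snew: "Inr s \<in> new_worlds D a M"
    using assms(3,4) by (auto simp: new_worlds_def is_state_def)
  have p1: "\<forall>f\<in>Sensed D a. \<forall>l\<in>{Fl f, Neg (Fl f)}.
            sat M s l \<longrightarrow> sat M' s' (C (FD D a M s) l)"
    unfolding M' s' by (intro ballI impI C_F_agree)
  have p2: "\<forall>f\<in>Sensed D a.
            sat M' s' (C (PD D a M s) (Or (C (FD D a M s) (Fl f)) (C (FD D a M s) (Neg (Fl f)))))"
  proof
    fix f assume f: "f \<in> Sensed D a"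
    show "sat M' s' (C (PD D a M s) (Or (C (FD D a M s) (Fl f)) (C (FD D a M s) (Neg (Fl f)))))"
      unfolding M' s'
    proof (rule sat_C_closed[where S = "range Inr"])
      fix i x y assume "i \<in> PD D a M s" "(x, y) \<in> rel (sense_update D a M s) i" "x \<in> range Inr"
      then show "y \<in> range Inr" using rel_Inr_P by fastforce
    next
      fix x :: "'w + 'w" assume "x \<in> range Inr"
      then obtain u where u: "x = Inr u" by auto
      show "sat (sense_update D a M s) x (Or (C (FD D a M s) (Fl f)) (C (FD D a M s) (Neg (Fl f))))"
      proof (cases "f \<in> interp M u")
        case True
        then show ?thesis using C_F_agree[OF f, of "Fl f" M u s] u
          unfolding sat.simps(4) by (intro disjI1) (simp only: sat.simps(1) insertI1)
      next
        case False
        then show ?thesis using C_F_agree[OF f, of "Neg (Fl f)" M u s] u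
          unfolding sat.simps(4) by (intro disjI2) (simp only: sat.simps(1,2) insert_iff simp_thms)
      qed
    qed auto
  qed
  have p3: "\<forall>i\<in>OD D a M s. \<forall>\<psi>. sat M' s' (B i \<psi>) \<longleftrightarrow> sat M s (B i \<psi>)"
  proof (intro ballI allI)
    fix i \<psi> assume i: "i \<in> OD D a M s"
    show "sat M' s' (B i \<psi>) \<longleftrightarrow> sat M s (B i \<psi>)"
      unfolding M' s' sat.simps rel_Inr_O[OF i snew] by (auto simp only: sat_Inl)
  qed
  show ?thesis using p1 p2 p3 by blast
qed

end
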